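(* No infinite betweenness algebra is a MIA; that is, if $\langle A,f,g\rangle$ is a betweenness algebra with $A$ infinite, then $Q_f\neq S_g$.
   Context: A PS-algebra is $\langle A,f,g\rangle$ where $A$ is a Boolean algebra with at least two elements (operations $+,\cdot,-,0,1$) and $f,g\colon A^2\to A$ satisfy: $f(x,y)=0$ whenever $x=0$ or $y=0$; $f$ is additive in each argument; $g(x,y)=1$ whenever $x=0$ or $y=0$; $g$ is co-additive in each argument ($g(x+x',y)=g(x,y)\cdot g(x',y)$, $g(x,y+y')=g(x,y)\cdot g(x,y')$). A betweenness algebra is a PS-algebra satisfying for all $x,y,z$: (ABT0) $x\leq f(x,x)$; (ABT1$_f$) $f(x,y)\leq f(y,x)$; (ABT1$_g$) $g(x,y)\leq g(y,x)$; (ABT2) $y\cdot f(x,z)\leq f(x\cdot f(x,y),z)$; (ABT3) $f(x,g(x,-y)\cdot y)\leq y$; (wMIA) if $x\neq0$ and $y\neq0$ then $g(x,y)\leq f(x,y)$. On the set of ultrafilters of $A$ define $Q_f(\mathcal U_1,\mathcal U_2,\mathcal U_3)\iff f[\mathcal U_1\times\mathcal U_3]\subseteq\mathcal U_2$ and $S_g(\mathcal U_1,\mathcal U_2,\mathcal U_3)\iff g[\mathcal U_1\times\mathcal U_3]\cap\mathcal U_2\neq\emptyset$. A PS-algebra is a MIA (mixed algebra) if $Q_f=S_g$. *)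

theory Defs
  imports Main
begin

text \<open>Boolean algebras are modelled by the type class boolean_algebra:
  + is sup, \<cdot> is inf, - is uminus, 0 is bot, 1 is top.\<close>

definition ps_algebra :: "('a::boolean_algebra \<Rightarrow> 'a \<Rightarrow> 'a) \<Rightarrow> ('a \<Rightarrow> 'a \<Rightarrow> 'a) \<Rightarrow> bool" where
  "ps_algebra f g \<longleftrightarrow>
     (bot::'a) \<noteq> top \<and>
     (\<forall>x y. (x = bot \<or> y = bot) \<longrightarrow> f x y = bot) \<and>
     (\<forall>x x' y. f (sup x x') y = sup (f x y) (f x' y)) \<and>
     (\<forall>x y y'. f x (sup y y') = sup (f x y) (f x y')) \<and>
     (\<forall>x y. (x = bot \<or> y = bot) \<longrightarrow> g x y = top) \<and>
     (\<forall>x x' y. g (sup x x') y = inf (g x y) (g x' y)) \<and>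
     (\<forall>x y y'. g x (sup y y') = inf (g x y) (g x y'))"

definition betweenness_algebra :: "('a::boolean_algebra \<Rightarrow> 'a \<Rightarrow> 'a) \<Rightarrow> ('a \<Rightarrow> 'a \<Rightarrow> 'a) \<Rightarrow> bool" where
  "betweenness_algebra f g \<longleftrightarrow>
     ps_algebra f g \<and>
     (\<forall>x. x \<le> f x x) \<and>
     (\<forall>x y. f x y \<le> f y x) \<and>
     (\<forall>x y. g x y \<le> g y x) \<and>
     (\<forall>x y z. inf y (f x z) \<le> f (inf x (f x y)) z) \<and>
     (\<forall>x y. f x (inf (g x (- y)) y) \<le> y) \<and>
     (\<forall>x y. x \<noteq> bot \<and> y \<noteq> bot \<longrightarrow> g x y \<le> f x y)"

definition ultrafilter_ba :: "'a::boolean_algebra set \<Rightarrow> bool" where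
  "ultrafilter_ba U \<longleftrightarrow>
     top \<in> U \<and> bot \<notin> U \<and>
     (\<forall>x y. x \<in> U \<and> y \<in> U \<longrightarrow> inf x y \<in> U) \<and>
     (\<forall>x y. x \<in> U \<and> x \<le> y \<longrightarrow> y \<in> U) \<and>
     (\<forall>x. x \<in> U \<or> - x \<in> U)"

definition Q_rel :: "('a::boolean_algebra \<Rightarrow> 'a \<Rightarrow> 'a) \<Rightarrow> 'a set \<Rightarrow> 'a set \<Rightarrow> 'a set \<Rightarrow> bool" where
  "Q_rel f U1 U2 U3 \<longleftrightarrow> (\<forall>x\<in>U1. \<forall>z\<in>U3. f x z \<in> U2)"

definition S_rel :: "('a::boolean_algebra \<Rightarrow> 'a \<Rightarrow> 'a) \<Rightarrow> 'a set \<Rightarrow> 'a set \<Rightarrow> 'a set \<Rightarrow> bool" where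
  "S_rel g U1 U2 U3 \<longleftrightarrow> (\<exists>x\<in>U1. \<exists>z\<in>U3. g x z \<in> U2)"

definition mia :: "('a::boolean_algebra \<Rightarrow> 'a \<Rightarrow> 'a) \<Rightarrow> ('a \<Rightarrow> 'a \<Rightarrow> 'a) \<Rightarrow> bool" where
  "mia f g \<longleftrightarrow> ps_algebra f g \<and>
     (\<forall>U1 U2 U3. ultrafilter_ba U1 \<and> ultrafilter_ba U2 \<and> ultrafilter_ba U3 \<longrightarrow>
        (Q_rel f U1 U2 U3 \<longleftrightarrow> S_rel g U1 U2 U3))"

end

theory Submission
  imports Defs
begin

definition pfilter :: "'a::boolean_algebra set \<Rightarrow> bool" where
  "pfilter F \<longleftrightarrow> top \<in> F \<and> bot \<notin> F \<and>
     (\<forall>x y. x \<in> F \<and> y \<in> F \<longrightarrow> inf x y \<in> F) \<and>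
     (\<forall>x y. x \<in> F \<and> x \<le> y \<longrightarrow> y \<in> F)"

lemma max_pfilter_ultra:
  fixes M :: "'a::boolean_algebra set"
  assumes pM: "pfilter M" and mx: "\<And>G. pfilter G \<Longrightarrow> M \<subseteq> G \<Longrightarrow> G = M"
  shows "ultrafilter_ba M"
proof -
  have "x \<in> M \<or> - x \<in> M" for x
  proof (rule ccontr)
    assume n: "\<not> (x \<in> M \<or> - x \<in> M)"
    define G where "G = {y. \<exists>m\<in>M. inf m x \<le> y}"
    have nb: "bot \<notin> G"
    proof
      assume "bot \<in> G"
      then obtain m where m: "m \<in> M" "inf m x \<le> bot" unfolding G_def by auto
      then have "m \<le> - x" by (metis shunt1 sup_bot_right)
      then show False using m pM n unfolding pfilter_def by blast
    qed
    have "pfilter G" unfolding pfilter_def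
    proof (intro conjI allI impI)
      show "top \<in> G" using pM unfolding G_def pfilter_def by auto
      show "bot \<notin> G" by (rule nb)
    next
      fix a b assume "a \<in> G \<and> b \<in> G"
      then obtain m1 m2 where "m1 \<in> M" "inf m1 x \<le> a" "m2 \<in> M" "inf m2 x \<le> b"
        unfolding G_def by auto
      moreover then have "inf m1 m2 \<in> M" using pM unfolding pfilter_def by blast
      moreover have "inf (inf m1 m2) x \<le> inf a b"
      proof (rule le_infI)
        have "inf (inf m1 m2) x \<le> inf m1 x" by (rule inf_mono) simp_all
        then show "inf (inf m1 m2) x \<le> a" using \<open>inf m1 x \<le> a\<close> by (rule order_trans)
        have "inf (inf m1 m2) x \<le> inf m2 x" by (rule inf_mono) simp_all
        then show "inf (inf m1 m2) x \<le> b" using \<open>inf m2 x \<le> b\<close> by (rule order_trans)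
      qed
      ultimately show "inf a b \<in> G" unfolding G_def by blast
    next
      fix a b assume "a \<in> G \<and> a \<le> b"
      then obtain m where "m \<in> M" "inf m x \<le> a" "a \<le> b" unfolding G_def by blast
      then show "b \<in> G" unfolding G_def using order_trans[of "inf m x" a b] by blast
    qed
    moreover have "M \<subseteq> G" unfolding G_def using inf.cobounded1 by blast
    ultimately have "G = M" using mx by blast
    moreover have "x \<in> G" using pM unfolding G_def pfilter_def by auto
    ultimately show False using n by blast
  qed
  then show ?thesis using pM unfolding pfilter_def ultrafilter_ba_def by blast
qed

lemma pfD:
  assumes "pfilter G"
  shows "top \<in> G" "bot \<notin> G" "x \<in> G \<Longrightarrow> y \<in> G \<Longrightarrow> inf x y \<in> G"
    "x \<in> G \<Longrightarrow> x \<le> y \<Longrightarrow> y \<in> G"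
  using assms unfolding pfilter_def by blast+

lemma pfI:
  assumes "top \<in> G" "bot \<notin> G" "\<And>x y. x \<in> G \<Longrightarrow> y \<in> G \<Longrightarrow> inf x y \<in> G"
    "\<And>x y. x \<in> G \<Longrightarrow> x \<le> y \<Longrightarrow> y \<in> G"
  shows "pfilter G"
  using assms unfolding pfilter_def by blast

lemma ultra_extend:
  fixes F :: "'a::boolean_algebra set"
  assumes pF: "pfilter F"
  shows "\<exists>U. ultrafilter_ba U \<and> F \<subseteq> U"
proof -
  define A where "A = {G. pfilter G \<and> F \<subseteq> G}"
  have "\<exists>M\<in>A. \<forall>X\<in>A. M \<subseteq> X \<longrightarrow> X = M"
  proof (rule subset_Zorn_nonempty)
    have "F \<in> A" unfolding A_def using pF by simp
    then show "A \<noteq> {}" by auto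
  next
    fix C assume ne: "C \<noteq> {}" and ch: "subset.chain A C"
    then have sub: "C \<subseteq> A" and cmp: "\<And>X Y. X \<in> C \<Longrightarrow> Y \<in> C \<Longrightarrow> X \<subseteq> Y \<or> Y \<subseteq> X"
      unfolding subset_chain_def by auto
    have pC: "\<And>X. X \<in> C \<Longrightarrow> pfilter X" and FC: "\<And>X. X \<in> C \<Longrightarrow> F \<subseteq> X"
      using sub unfolding A_def by auto
    obtain X0 where X0: "X0 \<in> C" using ne by auto
    have "pfilter (\<Union>C)"
    proof (rule pfI)
      show "top \<in> \<Union>C" using X0 pfD(1)[OF pC[OF X0]] by auto
      show "bot \<notin> \<Union>C"
      proof
        assume "bot \<in> \<Union>C"
        then obtain X where "X \<in> C" "bot \<in> X" by auto
        then show False using pfD(2)[OF pC] by auto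
      qed
    next
      fix a b assume "a \<in> \<Union>C" "b \<in> \<Union>C"
      then obtain X Y where XY: "X \<in> C" "Y \<in> C" "a \<in> X" "b \<in> Y" by auto
      show "inf a b \<in> \<Union>C"
      proof (cases "X \<subseteq> Y")
        case True
        then have "inf a b \<in> Y" using pfD(3)[OF pC[OF XY(2)]] XY by auto
        then show ?thesis using XY by auto
      next
        case False
        then have "Y \<subseteq> X" using cmp[OF XY(1,2)] by auto
        then have "inf a b \<in> X" using pfD(3)[OF pC[OF XY(1)]] XY by auto
        then show ?thesis using XY by auto
      qed
    next
      fix a b assume "a \<in> \<Union>C" "a \<le> b"
      then obtain X where "X \<in> C" "a \<in> X" by auto
      then have "b \<in> X" using pfD(4)[OF pC] \<open>a \<le> b\<close> by auto
      then show "b \<in> \<Union>C" using \<open>X \<in> C\<close> by auto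
    qed
    moreover have "F \<subseteq> \<Union>C" using FC X0 by auto
    ultimately show "\<Union>C \<in> A" unfolding A_def by simp
  qed
  then obtain M where MA: "M \<in> A" and mx: "\<forall>X\<in>A. M \<subseteq> X \<longrightarrow> X = M" by auto
  have pM: "pfilter M" and FM: "F \<subseteq> M" using MA unfolding A_def by auto
  have "ultrafilter_ba M"
  proof (rule max_pfilter_ultra[OF pM])
    fix G assume "pfilter G" "M \<subseteq> G"
    then have "G \<in> A" using FM unfolding A_def by auto
    then show "G = M" using mx \<open>M \<subseteq> G\<close> by auto
  qed
  then show ?thesis using FM by auto
qed

lemma ultra_exists:
  fixes x :: "'a::boolean_algebra"
  assumes "x \<noteq> bot"
  shows "\<exists>U. ultrafilter_ba U \<and> x \<in> U"
proof -
  have "pfilter {y. x \<le> y}" unfolding pfilter_def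
  proof (intro conjI allI impI)
    show "top \<in> {y. x \<le> y}" by simp
    show "bot \<notin> {y. x \<le> y}" using assms by (simp add: bot_unique)
  next
    fix a b assume "a \<in> {y. x \<le> y} \<and> b \<in> {y. x \<le> y}"
    then show "inf a b \<in> {y. x \<le> y}" by simp
  next
    fix a b assume "a \<in> {y. x \<le> y} \<and> a \<le> b"
    then show "b \<in> {y. x \<le> y}" using order_trans[of x a b] by simp
  qed
  then show ?thesis using ultra_extend by fastforce
qed

definition atom_ba :: "'a::boolean_algebra \<Rightarrow> bool" where
  "atom_ba a \<longleftrightarrow> a \<noteq> bot \<and> (\<forall>b. b \<le> a \<longrightarrow> b = bot \<or> b = a)"

lemma ultra_props:
  assumes "ultrafilter_ba U"
  shows "top \<in> U" "bot \<notin> U" "x \<in> U \<Longrightarrow> y \<in> U \<Longrightarrow> inf x y \<in> U"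
    "x \<in> U \<Longrightarrow> x \<le> y \<Longrightarrow> y \<in> U" "x \<in> U \<or> - x \<in> U"
  using assms unfolding ultrafilter_ba_def by blast+

lemma ultra_not_both:
  assumes "ultrafilter_ba U" "x \<in> U" "- x \<in> U" shows False
  using ultra_props[OF assms(1)] assms(2,3) by (metis inf_compl_bot)


lemma psD:
  assumes "ps_algebra f g" 
  shows "f (sup x x') y = sup (f x y) (f x' y)" "f x (sup y y') = sup (f x y) (f x y')"
    "g (sup x x') y = inf (g x y) (g x' y)" "g x (sup y y') = inf (g x y) (g x y')"
  using assms unfolding ps_algebra_def by simp_all
lemma baD:
  assumes "betweenness_algebra f g" 
  shows "ps_algebra f g" "x \<le> f x x" "f x (inf (g x (- y)) y) \<le> y"
proof -
  have "ps_algebra f g \<and> (\<forall>x. x \<le> f x x) \<and> (\<forall>x y. f x (inf (g x (- y)) y) \<le> y)"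
    using assms unfolding betweenness_algebra_def by (elim conjE) (intro conjI)
  then show "ps_algebra f g" "x \<le> f x x" "f x (inf (g x (- y)) y) \<le> y" by simp_all
qed
lemma miaD:
  assumes "mia f g" "ultrafilter_ba U1" "ultrafilter_ba U2" "ultrafilter_ba U3"
  shows "Q_rel f U1 U2 U3 \<longleftrightarrow> S_rel g U1 U2 U3"
proof -
  have "\<forall>U1 U2 U3. ultrafilter_ba U1 \<and> ultrafilter_ba U2 \<and> ultrafilter_ba U3 \<longrightarrow>
        (Q_rel f U1 U2 U3 \<longleftrightarrow> S_rel g U1 U2 U3)" using assms(1) unfolding mia_def by (elim conjE)
  then show ?thesis using assms(2-4) by simp
qed
lemma f_mono:
  assumes "ps_algebra f g" "a \<le> a'" "c \<le> c'"
  shows "f a c \<le> f a' c'"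
proof -
  have fa: "\<And>x x' y. f (sup x x') y = sup (f x y) (f x' y)"
   and fb: "\<And>x y y'. f x (sup y y') = sup (f x y) (f x y')"
    by (rule psD[OF assms(1)])+
  have sa: "sup a a' = a'" and sc: "sup c c' = c'" using assms(2,3) by (simp_all add: sup_absorb2)
  have e1: "f a' c' = sup (f a c') (f a' c')" using fa[of a a' c', unfolded sa] .
  have e2: "f a c' = sup (f a c) (f a c')" using fb[of a c c', unfolded sc] .
  have "f a c \<le> f a c'" by (subst e2) (rule sup.cobounded1)
  also have "f a c' \<le> f a' c'" by (subst e1) (rule sup.cobounded1)
  finally show ?thesis .
qed

lemma g_anti:
  assumes "ps_algebra f g" "a \<le> a'" "c \<le> c'"
  shows "g a' c' \<le> g a c"
proof -
  have ga: "\<And>x x' y. g (sup x x') y = inf (g x y) (g x' y)"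
   and gb: "\<And>x y y'. g x (sup y y') = inf (g x y) (g x y')"
    by (rule psD[OF assms(1)])+
  have sa: "sup a a' = a'" and sc: "sup c c' = c'" using assms(2,3) by (simp_all add: sup_absorb2)
  have e1: "g a' c' = inf (g a c') (g a' c')" using ga[of a a' c', unfolded sa] .
  have e2: "g a c' = inf (g a c) (g a c')" using gb[of a c c', unfolded sc] .
  have "g a' c' \<le> g a c'" by (subst e1) (rule inf.cobounded1)
  also have "g a c' \<le> g a c" by (subst e2) (rule inf.cobounded1)
  finally show ?thesis .
qed

lemma ultra_has_atom:
  fixes f g :: "'a::boolean_algebra \<Rightarrow> 'a \<Rightarrow> 'a" and U :: "'a set"
  assumes ba: "betweenness_algebra f g" and m: "mia f g" and U: "ultrafilter_ba U"
  shows "\<exists>a\<in>U. atom_ba a"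
proof -
  have ps: "ps_algebra f g" using baD[OF ba] by blast
  have abt0: "\<And>x. x \<le> f x x" using baD[OF ba] by blast
  have abt3: "\<And>x y. f x (inf (g x (- y)) y) \<le> y" using baD[OF ba] by blast
  note QS = miaD[OF m]
  have "Q_rel f U U U" unfolding Q_rel_def
  proof (intro ballI)
    fix x z assume "x \<in> U" "z \<in> U"
    then have i: "inf x z \<in> U" using ultra_props[OF U] by blast
    have "inf x z \<le> f (inf x z) (inf x z)" by (rule abt0)
    also have "\<dots> \<le> f x z" by (rule f_mono[OF ps]) auto
    finally show "f x z \<in> U" using i ultra_props[OF U] by blast
  qed
  then have "S_rel g U U U" using QS[OF U U U] by simp
  then obtain x0 z0 where x0: "x0 \<in> U" and z0: "z0 \<in> U" and g0: "g x0 z0 \<in> U"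
    unfolding S_rel_def by blast
  define w where "w = inf (inf x0 z0) (g x0 z0)"
  have wU: "w \<in> U" unfolding w_def using x0 z0 g0 ultra_props[OF U] by blast
  have wnb: "w \<noteq> bot" using wU ultra_props[OF U] by blast
  have "atom_ba w" unfolding atom_ba_def
  proof (intro conjI allI impI wnb)
    fix v assume vw: "v \<le> w"
    show "v = bot \<or> v = w"
    proof (rule ccontr)
      assume "\<not> (v = bot \<or> v = w)"
      then have vnb: "v \<noteq> bot" and vnw: "v \<noteq> w" by auto
      have "inf w (- v) \<noteq> bot"
      proof
        assume "inf w (- v) = bot"
        then have "w \<le> v" by (simp add: inf_shunt)
        then show False using vw vnw by simp
      qed
      then obtain W where W: "ultrafilter_ba W" and wvW: "inf w (- v) \<in> W"
        using ultra_exists by blast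
      obtain V where V: "ultrafilter_ba V" and vV: "v \<in> V" using ultra_exists vnb by blast
      have wx: "w \<le> x0" and wz: "w \<le> z0" and wg: "w \<le> g x0 z0" unfolding w_def
        by (simp_all add: le_infI1)
      have vx: "v \<le> x0" using vw wx by (rule order_trans)
      have vz: "v \<le> z0" using vw wz by (rule order_trans)
      have "g x0 z0 \<le> g v v" by (rule g_anti[OF ps vx vz])
      then have "w \<le> g v v" using wg order_trans by blast
      then have "inf w (- v) \<le> g v v" by (rule le_infI1)
      then have "g v v \<in> W" using wvW ultra_props[OF W] by blast
      then have "S_rel g V W V" unfolding S_rel_def using vV by blast
      then have Q: "Q_rel f V W V" using QS[OF V W V] by simp
      define y where "y = - inf w (- v)"
      have my: "- y = inf w (- v)" unfolding y_def by simp
      have yV: "y \<in> V" unfolding y_def using vV ultra_props[OF V] by (auto simp: sup_commute)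
      have "inf w (- v) \<le> z0" using wz by (rule le_infI1)
      then have "g x0 z0 \<le> g v (- y)" unfolding my by (rule g_anti[OF ps vx])
      then have "w \<le> g v (- y)" using wg order_trans by blast
      then have "v \<le> g v (- y)" using vw order_trans by blast
      then have "g v (- y) \<in> V" using vV ultra_props[OF V] by blast
      then have cV: "inf (g v (- y)) y \<in> V" using yV ultra_props[OF V] by blast
      then have "f v (inf (g v (- y)) y) \<in> W" using Q vV unfolding Q_rel_def by blast
      then have "y \<in> W" using abt3 ultra_props[OF W] by blast
      then show False using my wvW W ultra_not_both by metis
    qed
  qed
  then show ?thesis using wU by blast
qed

definition J :: "'a::boolean_algebra list \<Rightarrow> 'a" where
  "J xs = foldr sup xs bot"

lemma J_append: "J (xs @ ys) = sup (J xs) (J ys)"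
  unfolding J_def by (induction xs) (auto simp: sup_assoc)

lemma inf_atom: "atom_ba a \<Longrightarrow> inf y a = (if a \<le> y then a else bot)"
  unfolding atom_ba_def by (metis inf.absorb2 inf.cobounded2 inf.orderI inf_commute)

lemma inf_J: "\<forall>a\<in>set xs. atom_ba a \<Longrightarrow> inf y (J xs) = J (filter (\<lambda>a. a \<le> y) xs)"
proof (induction xs)
  case Nil then show ?case by (simp add: J_def)
next
  case (Cons a xs)
  then have "inf y (J (a # xs)) = sup (inf y a) (inf y (J xs))"
    by (simp add: J_def inf_sup_distrib1)
  then show ?case using Cons inf_atom[of a y] by (simp add: J_def)
qed

lemma finite_if_J_top:
  assumes "\<forall>a\<in>set xs. atom_ba a" "J xs = (top::'a::boolean_algebra)"
  shows "finite (UNIV :: 'a set)"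
proof -
  have "UNIV \<subseteq> (\<lambda>S. J (filter (\<lambda>a. a \<in> S) xs)) ` Pow (set xs)"
  proof
    fix y :: 'a
    have "y = J (filter (\<lambda>a. a \<le> y) xs)" using inf_J[OF assms(1), of y] assms(2) by simp
    also have "\<dots> = J (filter (\<lambda>a. a \<in> {a\<in>set xs. a \<le> y}) xs)"
      by (metis (mono_tags, lifting) filter_cong mem_Collect_eq)
    finally show "y \<in> (\<lambda>S. J (filter (\<lambda>a. a \<in> S) xs)) ` Pow (set xs)" by blast
  qed
  then show ?thesis by (meson finite_Pow_iff finite_imageI finite_set finite_subset)
qed

theorem theorem49:
  fixes f g :: "'a::boolean_algebra \<Rightarrow> 'a \<Rightarrow> 'a"
  assumes "betweenness_algebra f g"
    and "infinite (UNIV :: 'a set)"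
  shows "\<not> mia f g"
proof
  assume m: "mia f g"
  have nt: "\<And>xs. \<forall>a\<in>set xs. atom_ba a \<Longrightarrow> J xs \<noteq> (top::'a)"
    using finite_if_J_top assms(2) by blast
  define F where "F = {y::'a. \<exists>xs. (\<forall>a\<in>set xs. atom_ba a) \<and> - J xs \<le> y}"
  have "pfilter F" unfolding pfilter_def
  proof (intro conjI allI impI)
    show "top \<in> F" unfolding F_def by (rule CollectI, rule exI[of _ "[]"]) simp
    show "bot \<notin> F"
    proof
      assume "bot \<in> F"
      then obtain xs where "\<forall>a\<in>set xs. atom_ba a" "- J xs \<le> (bot::'a)" unfolding F_def by blast
      then show False using nt by (metis bot_unique compl_bot_eq double_compl)
    qed
  next
    fix a b assume "a \<in> F \<and> b \<in> F"
    then obtain xs ys where "\<forall>a\<in>set xs. atom_ba a" "- J xs \<le> a" "\<forall>a\<in>set ys. atom_ba a" "- J ys \<le> b"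
      unfolding F_def by blast
    then have "\<forall>a\<in>set (xs @ ys). atom_ba a" "- J (xs @ ys) \<le> inf a b"
      by (auto simp: J_append intro: le_infI1 le_infI2)
    then show "inf a b \<in> F" unfolding F_def by blast
  next
    fix a b assume "a \<in> F \<and> a \<le> b"
    then obtain xs where "\<forall>a\<in>set xs. atom_ba a" "- J xs \<le> a" "a \<le> b" unfolding F_def by blast
    then show "b \<in> F" unfolding F_def using order_trans[of "- J xs" a b] by blast
  qed
  then obtain U where U: "ultrafilter_ba U" and FU: "F \<subseteq> U" using ultra_extend by blast
  obtain a where aU: "a \<in> U" and at: "atom_ba a" using ultra_has_atom[OF assms(1) m U] by blast
  have "- a \<in> F" unfolding F_def by (rule CollectI, rule exI[of _ "[a]"]) (simp add: J_def at)
  then show False using FU aU U ultra_not_both by blast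
qed

end
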